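(* Let $m,n$ be positive integers with $m$ even, and let $R$ be an $m\times n$ rectangular permutation matrix. If $R$ is not centrosymmetric, then there exist $m\times n$ centrosymmetric rectangular permutation matrices $Q_1\neq Q_2$ such that $R+R^\pi=Q_1+Q_2$.
   Context: A rectangular permutation matrix is an $m\times n$ $(0,1)$-matrix with exactly one $1$ in each row. For $A=(a_{i,j})\in M_{m,n}$, $A^\pi$ denotes the matrix with $(A^\pi)_{i,j}=a_{m+1-i,n+1-j}$; $A$ is centrosymmetric if $A=A^\pi$. *)

theory Defs
  imports Main
begin

text \<open>An m x n matrix is represented as a function nat => nat => int, with
  rows indexed by 1..m and columns by 1..n; entries outside this range are
  required to be 0 so that equality of functions is equality of matrices.\<close>

definition is_mat :: "nat \<Rightarrow> nat \<Rightarrow> (nat \<Rightarrow> nat \<Rightarrow> int) \<Rightarrow> bool" where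
  "is_mat m n A \<longleftrightarrow> (\<forall>i j. \<not> (1 \<le> i \<and> i \<le> m \<and> 1 \<le> j \<and> j \<le> n) \<longrightarrow> A i j = 0)"

definition rect_perm :: "nat \<Rightarrow> nat \<Rightarrow> (nat \<Rightarrow> nat \<Rightarrow> int) \<Rightarrow> bool" where
  "rect_perm m n A \<longleftrightarrow> is_mat m n A
     \<and> (\<forall>i\<in>{1..m}. \<forall>j\<in>{1..n}. A i j = 0 \<or> A i j = 1)
     \<and> (\<forall>i\<in>{1..m}. card {j\<in>{1..n}. A i j = 1} = 1)"

definition mat_pi :: "nat \<Rightarrow> nat \<Rightarrow> (nat \<Rightarrow> nat \<Rightarrow> int) \<Rightarrow> (nat \<Rightarrow> nat \<Rightarrow> int)" where
  "mat_pi m n A = (\<lambda>i j. if 1 \<le> i \<and> i \<le> m \<and> 1 \<le> j \<and> j \<le> n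
                          then A (m + 1 - i) (n + 1 - j) else 0)"

definition centrosymmetric :: "nat \<Rightarrow> nat \<Rightarrow> (nat \<Rightarrow> nat \<Rightarrow> int) \<Rightarrow> bool" where
  "centrosymmetric m n A \<longleftrightarrow> A = mat_pi m n A"

definition mat_add :: "(nat \<Rightarrow> nat \<Rightarrow> int) \<Rightarrow> (nat \<Rightarrow> nat \<Rightarrow> int) \<Rightarrow> (nat \<Rightarrow> nat \<Rightarrow> int)" where
  "mat_add A B = (\<lambda>i j. A i j + B i j)"

end

theory Submission
  imports Defs
begin

lemma card_flip:
  fixes P :: "nat \<Rightarrow> bool"
  shows "card {j\<in>{1..n}. P (n + 1 - j)} = card {j\<in>{1..n}. P j}"
proof -
  have inj: "inj_on (\<lambda>j. n + 1 - j) {j\<in>{1..n}. P j}"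
    by (auto simp: inj_on_def)
  have img: "(\<lambda>j. n + 1 - j) ` {j\<in>{1..n}. P j} = {j\<in>{1..n}. P (n + 1 - j)}"
  proof (rule set_eqI, rule iffI)
    fix x assume "x \<in> (\<lambda>j. n + 1 - j) ` {j\<in>{1..n}. P j}"
    then obtain j where "j \<in> {1..n}" "P j" "x = n + 1 - j" by auto
    then show "x \<in> {j\<in>{1..n}. P (n + 1 - j)}" by auto
  next
    fix x assume x: "x \<in> {j\<in>{1..n}. P (n + 1 - j)}"
    then have "x = n + 1 - (n + 1 - x)" "n + 1 - x \<in> {j\<in>{1..n}. P j}" by auto
    then show "x \<in> (\<lambda>j. n + 1 - j) ` {j\<in>{1..n}. P j}" by blast
  qed
  show ?thesis using card_image[OF inj] img by simp
qed

lemma rect_perm_pi: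
  assumes "rect_perm m n A"
  shows "rect_perm m n (mat_pi m n A)"
proof -
  have "is_mat m n (mat_pi m n A)" by (auto simp: is_mat_def mat_pi_def)
  moreover have "\<forall>i\<in>{1..m}. \<forall>j\<in>{1..n}. mat_pi m n A i j = 0 \<or> mat_pi m n A i j = 1"
  proof (intro ballI)
    fix i j assume i: "i \<in> {1..m}" and j: "j \<in> {1..n}"
    have "m + 1 - i \<in> {1..m}" "n + 1 - j \<in> {1..n}" using i j by auto
    then show "mat_pi m n A i j = 0 \<or> mat_pi m n A i j = 1"
      using assms i j unfolding rect_perm_def mat_pi_def by auto
  qed
  moreover have "\<forall>i\<in>{1..m}. card {j\<in>{1..n}. mat_pi m n A i j = 1} = 1"
  proof
    fix i assume i: "i \<in> {1..m}"
    have "{j\<in>{1..n}. mat_pi m n A i j = 1} = {j\<in>{1..n}. A (m + 1 - i) (n + 1 - j) = 1}"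
      using i by (auto simp: mat_pi_def)
    also have "card \<dots> = card {j\<in>{1..n}. A (m + 1 - i) j = 1}"
      by (rule card_flip)
    also have "\<dots> = 1"
    proof -
      have "m + 1 - i \<in> {1..m}" using i by auto
      then show ?thesis using assms unfolding rect_perm_def by blast
    qed
    finally show "card {j\<in>{1..n}. mat_pi m n A i j = 1} = 1" .
  qed
  ultimately show ?thesis unfolding rect_perm_def by blast
qed

lemma rect_perm_mix:
  assumes "rect_perm m n A" "rect_perm m n B"
  shows "rect_perm m n (\<lambda>i j. if i \<le> k then A i j else B i j)"
proof -
  have "\<forall>i\<in>{1..m}. card {j\<in>{1..n}. (if i \<le> k then A i j else B i j) = 1} = 1"
  proof
    fix i assume i: "i \<in> {1..m}"
    show "card {j\<in>{1..n}. (if i \<le> k then A i j else B i j) = 1} = 1"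
      using assms i unfolding rect_perm_def by (cases "i \<le> k") auto
  qed
  then show ?thesis using assms unfolding rect_perm_def is_mat_def by auto
qed

theorem mainTheorem2:
  fixes m n :: nat and R :: "nat \<Rightarrow> nat \<Rightarrow> int"
  assumes "m > 0" and "n > 0" and "even m"
    and "rect_perm m n R"
    and "\<not> centrosymmetric m n R"
  shows "\<exists>Q1 Q2. rect_perm m n Q1 \<and> rect_perm m n Q2
           \<and> centrosymmetric m n Q1 \<and> centrosymmetric m n Q2
           \<and> Q1 \<noteq> Q2
           \<and> mat_add R (mat_pi m n R) = mat_add Q1 Q2"
proof -
  define P where "P = mat_pi m n R"
  define h where "h = m div 2"
  have hm: "m = 2 * h" using assms(3) h_def by auto
  have isR: "is_mat m n R" using assms(4) by (simp add: rect_perm_def)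
  have RP: "rect_perm m n P" unfolding P_def by (rule rect_perm_pi[OF assms(4)])
  define Q1 where "Q1 = (\<lambda>i j. if i \<le> h then R i j else P i j)"
  define Q2 where "Q2 = (\<lambda>i j. if i \<le> h then P i j else R i j)"
  have r1: "rect_perm m n Q1" unfolding Q1_def by (rule rect_perm_mix[OF assms(4) RP])
  have r2: "rect_perm m n Q2" unfolding Q2_def by (rule rect_perm_mix[OF RP assms(4)])
  have PR: "\<And>i j. 1 \<le> i \<Longrightarrow> i \<le> m \<Longrightarrow> 1 \<le> j \<Longrightarrow> j \<le> n \<Longrightarrow>
      P (m + 1 - i) (n + 1 - j) = R i j"
    by (auto simp: P_def mat_pi_def)
  have Rout: "\<And>i j. \<not> (1 \<le> i \<and> i \<le> m \<and> 1 \<le> j \<and> j \<le> n) \<Longrightarrow> R i j = 0"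
    using isR by (simp add: is_mat_def)
  have c1: "centrosymmetric m n Q1"
    unfolding centrosymmetric_def
  proof (intro ext)
    fix i j
    show "Q1 i j = mat_pi m n Q1 i j"
    proof (cases "1 \<le> i \<and> i \<le> m \<and> 1 \<le> j \<and> j \<le> n")
      case True
      then show ?thesis using PR[of i j] hm
        by (auto simp: Q1_def mat_pi_def P_def)
    next
      case False
      then show ?thesis using Rout[OF False] by (auto simp: Q1_def mat_pi_def P_def)
    qed
  qed
  have c2: "centrosymmetric m n Q2"
    unfolding centrosymmetric_def
  proof (intro ext)
    fix i j
    show "Q2 i j = mat_pi m n Q2 i j"
    proof (cases "1 \<le> i \<and> i \<le> m \<and> 1 \<le> j \<and> j \<le> n")
      case True
      then show ?thesis using PR[of i j] hm
        by (auto simp: Q2_def mat_pi_def P_def)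
    next
      case False
      then show ?thesis using Rout[OF False] by (auto simp: Q2_def mat_pi_def P_def)
    qed
  qed
  have ne: "Q1 \<noteq> Q2"
  proof
    assume "Q1 = Q2"
    then have "\<And>i j. Q1 i j = Q2 i j" by simp
    then have "\<And>i j. R i j = P i j" unfolding Q1_def Q2_def by (metis)
    then have "R = P" by (intro ext)
    then show False using assms(5) by (simp add: centrosymmetric_def P_def)
  qed
  have s: "mat_add R (mat_pi m n R) = mat_add Q1 Q2"
    by (auto simp: mat_add_def Q1_def Q2_def P_def intro!: ext)
  show ?thesis using r1 r2 c1 c2 ne s by blast
qed

end
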